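(* Let $T_1,\dots,T_m:[0,1]\to[0,1]$ be $C^1$ maps with $T_i'(x)>0$ for all $x$, such that $T_i((0,1))\cap T_j((0,1))=\emptyset$ for $i\ne j$, and such that $D_n(\omega)\to0$ as $n\to\infty$ uniformly in $\omega\in\Sigma$. Then \[ \lim_{n\to\infty}\sup_{\omega\in\Sigma}\left|-\frac1n\log D_n(\omega)-A_ng(\omega)\right|=0. \]
   Context: $\Sigma=\{1,\dots,m\}^{\mathbb N}$ with shift $\sigma$; $\Pi(\omega)=\lim_{n\to\infty}T_{\omega_1}\circ\cdots\circ T_{\omega_n}(0)$. $D_n(\omega)=\operatorname{diam}(T_{\omega_1}\circ\cdots\circ T_{\omega_n}([0,1]))$. $g(\omega)=-\log T'_{\omega_1}(\Pi(\sigma\omega))$ and $A_ng(\omega)=\frac1n\sum_{i=0}^{n-1}g(\sigma^i\omega)$. *)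

theory Defs
  imports "HOL-Analysis.Analysis" "HOL-Library.Extended_Real"
begin

text \<open>Symbol space: sequences with values in {1..m}; omega 0 is the first symbol.\<close>
definition Sigma_m :: "nat \<Rightarrow> (nat \<Rightarrow> nat) set" where
  "Sigma_m m = {\<omega>. \<forall>k. \<omega> k \<in> {1..m}}"

definition shift :: "(nat \<Rightarrow> nat) \<Rightarrow> (nat \<Rightarrow> nat)" where
  "shift \<omega> = (\<lambda>k. \<omega> (Suc k))"

fun comp_n :: "(nat \<Rightarrow> real \<Rightarrow> real) \<Rightarrow> (nat \<Rightarrow> nat) \<Rightarrow> nat \<Rightarrow> real \<Rightarrow> real" where
  "comp_n T \<omega> 0 = id"
| "comp_n T \<omega> (Suc n) = comp_n T \<omega> n \<circ> T (\<omega> n)"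

definition Pi_proj :: "(nat \<Rightarrow> real \<Rightarrow> real) \<Rightarrow> (nat \<Rightarrow> nat) \<Rightarrow> real" where
  "Pi_proj T \<omega> = lim (\<lambda>n. comp_n T \<omega> n 0)"

definition D_n :: "(nat \<Rightarrow> real \<Rightarrow> real) \<Rightarrow> nat \<Rightarrow> (nat \<Rightarrow> nat) \<Rightarrow> real" where
  "D_n T n \<omega> = diameter (comp_n T \<omega> n ` {0..1})"

text \<open>g(omega) = - log T'_{omega_1}(Pi(sigma omega)); T' is the derivative family.\<close>
definition g_fun :: "(nat \<Rightarrow> real \<Rightarrow> real) \<Rightarrow> (nat \<Rightarrow> real \<Rightarrow> real) \<Rightarrow> (nat \<Rightarrow> nat) \<Rightarrow> real" where
  "g_fun T T' \<omega> = - ln (T' (\<omega> 0) (Pi_proj T (shift \<omega>)))"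

definition A_n :: "((nat \<Rightarrow> nat) \<Rightarrow> real) \<Rightarrow> nat \<Rightarrow> (nat \<Rightarrow> nat) \<Rightarrow> real" where
  "A_n f n \<omega> = (1 / real n) * (\<Sum>i<n. f ((shift ^^ i) \<omega>))"

end

theory Submission
  imports Defs
begin


lemma funpow_shift: "(shift ^^ i) \<omega> j = \<omega> (i + j)"
  by (induction i arbitrary: j) (auto simp: shift_def)

lemma funpow_shift_Suc: "(shift ^^ Suc i) \<omega> = shift ((shift ^^ i) \<omega>)"
  by simp

lemma comp_add: "comp_n T \<omega> (k + j) = comp_n T \<omega> k \<circ> comp_n T ((shift ^^ k) \<omega>) j"
  by (induction j) (auto simp: funpow_shift comp_assoc)

lemma comp_Suc_first: "comp_n T \<omega> (Suc n) = T (\<omega> 0) \<circ> comp_n T (shift \<omega>) n"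
  using comp_add[of T \<omega> 1 n] by simp

lemma Sigma_funpow: "\<omega> \<in> Sigma_m m \<Longrightarrow> (shift ^^ i) \<omega> \<in> Sigma_m m"
  by (simp add: Sigma_m_def funpow_shift)

lemma Sigma_shift: "\<omega> \<in> Sigma_m m \<Longrightarrow> shift \<omega> \<in> Sigma_m m"
  by (simp add: Sigma_m_def shift_def)

locale ifs =
  fixes m :: nat and T T' :: "nat \<Rightarrow> real \<Rightarrow> real"
  assumes maps: "\<And>i. i \<in> {1..m} \<Longrightarrow> T i ` {0..1} \<subseteq> {0..1}"
    and deriv: "\<And>i x. i \<in> {1..m} \<Longrightarrow> x \<in> {0..1} \<Longrightarrow>
                  (T i has_real_derivative T' i x) (at x within {0..1})"
    and cont_deriv: "\<And>i. i \<in> {1..m} \<Longrightarrow> continuous_on {0..1} (T' i)"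
    and pos: "\<And>i x. i \<in> {1..m} \<Longrightarrow> x \<in> {0..1} \<Longrightarrow> T' i x > 0"
    and unif: "\<forall>e>0. \<exists>N. \<forall>n\<ge>N. \<forall>\<omega>\<in>Sigma_m m. \<bar>D_n T n \<omega>\<bar> < e"
begin

lemma T_cont: "i \<in> {1..m} \<Longrightarrow> continuous_on {0..1} (T i)"
  by (rule DERIV_continuous_on[OF deriv])

lemma T_mvt:
  assumes i: "i \<in> {1..m}" and "0 \<le> a" "a < b" "b \<le> 1"
  shows "\<exists>\<xi>. a < \<xi> \<and> \<xi> < b \<and> T i b - T i a = T' i \<xi> * (b - a)"
proof -
  have "\<exists>x\<in>{a<..<b}. T i b - T i a = (\<lambda>h. h * T' i x) (b - a)"
  proof (rule mvt_simple[OF \<open>a < b\<close>])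
    fix x assume "a \<le> x" "x \<le> b"
    hence "(T i has_real_derivative T' i x) (at x within {0..1})"
      using deriv[OF i] assms by auto
    hence "(T i has_real_derivative T' i x) (at x within {a..b})"
      by (rule DERIV_subset) (use assms in auto)
    thus "(T i has_derivative (\<lambda>h. h * T' i x)) (at x within {a..b})"
      by (simp add: has_field_derivative_def mult.commute[of _ "T' i x"])
  qed
  thus ?thesis by (auto simp: mult.commute)
qed

lemma T_strict:
  assumes "i \<in> {1..m}" "0 \<le> x" "x < y" "y \<le> 1"
  shows "T i x < T i y"
proof -
  obtain \<xi> where "x < \<xi>" "\<xi> < y" "T i y - T i x = T' i \<xi> * (y - x)"
    using T_mvt[OF assms] by blast
  moreover have "T' i \<xi> > 0" using pos[OF assms(1)] calculation assms by auto
  moreover have "T' i \<xi> * (y - x) > 0" using calculation assms by (simp add: mult_pos_pos)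
  ultimately show ?thesis by linarith
qed

lemma comp_props:
  assumes "\<omega> \<in> Sigma_m m"
  shows "(\<forall>x\<in>{0..1}. comp_n T \<omega> j x \<in> {0..1}) \<and> continuous_on {0..1} (comp_n T \<omega> j)
     \<and> (\<forall>x y. 0 \<le> x \<longrightarrow> x < y \<longrightarrow> y \<le> 1 \<longrightarrow> comp_n T \<omega> j x < comp_n T \<omega> j y)"
proof (induction j)
  case 0
  then show ?case by (auto intro: continuous_on_id)
next
  case (Suc j)
  have i: "\<omega> j \<in> {1..m}" using assms by (auto simp: Sigma_m_def)
  have mp: "\<forall>x\<in>{0..1}. T (\<omega> j) x \<in> {0..1}" using maps[OF i] by auto
  show ?case
  proof (intro conjI allI impI ballI)
    fix x :: real assume "x \<in> {0..1}"
    thus "comp_n T \<omega> (Suc j) x \<in> {0..1}" using Suc mp by auto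
  next
    show "continuous_on {0..1} (comp_n T \<omega> (Suc j))"
      using continuous_on_compose[OF T_cont[OF i], of "comp_n T \<omega> j"]
        continuous_on_subset[of "{0..1}" "comp_n T \<omega> j"] Suc mp
      by (simp add: image_subset_iff)
  next
    fix x y :: real assume "0 \<le> x" "x < y" "y \<le> 1"
    hence "T (\<omega> j) x < T (\<omega> j) y" by (rule T_strict[OF i])
    moreover have "T (\<omega> j) x \<in> {0..1}" "T (\<omega> j) y \<in> {0..1}" using mp \<open>0 \<le> x\<close> \<open>x<y\<close> \<open>y \<le> 1\<close> by auto
    ultimately show "comp_n T \<omega> (Suc j) x < comp_n T \<omega> (Suc j) y"
      using Suc by auto
  qed
qed

lemma comp_mono:
  assumes "\<omega> \<in> Sigma_m m" "0 \<le> x" "x \<le> y" "y \<le> 1"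
  shows "comp_n T \<omega> j x \<le> comp_n T \<omega> j y"
proof (cases "x = y")
  case False
  thus ?thesis using comp_props[OF assms(1), of j] assms by (meson less_eq_real_def)
qed simp

lemma comp_image:
  assumes "\<omega> \<in> Sigma_m m"
  shows "comp_n T \<omega> j ` {0..1} = {comp_n T \<omega> j 0 .. comp_n T \<omega> j 1}"
proof
  show "comp_n T \<omega> j ` {0..1} \<subseteq> {comp_n T \<omega> j 0..comp_n T \<omega> j 1}"
    using comp_mono[OF assms] by auto
next
  show "{comp_n T \<omega> j 0..comp_n T \<omega> j 1} \<subseteq> comp_n T \<omega> j ` {0..1}"
  proof
    fix y assume "y \<in> {comp_n T \<omega> j 0..comp_n T \<omega> j 1}"
    then obtain x where "0 \<le> x" "x \<le> 1" "comp_n T \<omega> j x = y"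
      using IVT'[of "comp_n T \<omega> j" 0 y 1] comp_props[OF assms, of j] by auto
    thus "y \<in> comp_n T \<omega> j ` {0..1}" by force
  qed
qed

lemma D_eq:
  assumes "\<omega> \<in> Sigma_m m"
  shows "D_n T j \<omega> = comp_n T \<omega> j 1 - comp_n T \<omega> j 0"
    and "D_n T j \<omega> > 0"
proof -
  have lt: "comp_n T \<omega> j 0 < comp_n T \<omega> j 1" using comp_props[OF assms, of j] by auto
  show "D_n T j \<omega> = comp_n T \<omega> j 1 - comp_n T \<omega> j 0"
    unfolding D_n_def comp_image[OF assms] using lt by simp
  thus "D_n T j \<omega> > 0" using lt by simp
qed

end


context ifs begin

lemma seq_in:
  assumes "\<omega> \<in> Sigma_m m" "k \<le> n"
  shows "comp_n T \<omega> k 0 \<le> comp_n T \<omega> n 0 \<and> comp_n T \<omega> n 0 \<le> comp_n T \<omega> k 1"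
proof -
  have eq: "comp_n T \<omega> n 0 = comp_n T \<omega> k (comp_n T ((shift ^^ k) \<omega>) (n - k) 0)"
    using comp_add[of T \<omega> k "n - k"] assms(2) by simp
  have "comp_n T ((shift ^^ k) \<omega>) (n - k) 0 \<in> {0..1}"
    using comp_props[OF Sigma_funpow[OF assms(1)], of k "n-k"] by auto
  thus ?thesis unfolding eq using comp_mono[OF assms(1)] by auto
qed

lemma Pi_mem:
  assumes "\<omega> \<in> Sigma_m m"
  shows "comp_n T \<omega> k 0 \<le> Pi_proj T \<omega> \<and> Pi_proj T \<omega> \<le> comp_n T \<omega> k 1"
proof -
  have "Cauchy (\<lambda>n. comp_n T \<omega> n 0)"
  proof (rule metric_CauchyI)
    fix e :: real assume "0 < e"
    then obtain N where N: "\<forall>n\<ge>N. \<forall>\<omega>\<in>Sigma_m m. \<bar>D_n T n \<omega>\<bar> < e" using unif by blast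
    have DN: "comp_n T \<omega> N 1 - comp_n T \<omega> N 0 < e" using N[rule_format, OF order_refl assms] D_eq[OF assms, of N] by simp
    show "\<exists>M. \<forall>m\<ge>M. \<forall>n\<ge>M. dist (comp_n T \<omega> m 0) (comp_n T \<omega> n 0) < e"
    proof (intro exI allI impI)
      fix a b assume "N \<le> a" "N \<le> b"
      thus "dist (comp_n T \<omega> a 0) (comp_n T \<omega> b 0) < e"
        using seq_in[OF assms, of N a] seq_in[OF assms, of N b] DN
        by (auto simp: dist_real_def abs_if)
    qed
  qed
  hence lim: "(\<lambda>n. comp_n T \<omega> n 0) \<longlonglongrightarrow> Pi_proj T \<omega>"
    unfolding Pi_proj_def using Cauchy_convergent_iff convergent_LIMSEQ_iff by blast
  show ?thesis
  proof
    show "comp_n T \<omega> k 0 \<le> Pi_proj T \<omega>"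
      by (rule LIMSEQ_le_const[OF lim]) (use seq_in[OF assms] in blast)
    show "Pi_proj T \<omega> \<le> comp_n T \<omega> k 1"
      by (rule Lim_bounded[OF lim, of k]) (use seq_in[OF assms] in blast)
  qed
qed

lemma decomp:
  "\<omega> \<in> Sigma_m m \<Longrightarrow> \<exists>\<xi>::nat\<Rightarrow>real.
     (\<forall>k<n. comp_n T ((shift ^^ Suc k) \<omega>) (n - k - 1) 0 \<le> \<xi> k \<and>
             \<xi> k \<le> comp_n T ((shift ^^ Suc k) \<omega>) (n - k - 1) 1) \<and>
     ln (D_n T n \<omega>) = (\<Sum>k<n. ln (T' (\<omega> k) (\<xi> k)))"
proof (induction n arbitrary: \<omega>)
  case 0
  have "D_n T 0 \<omega> = 1" using D_eq(1)[OF 0, of 0] by simp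
  thus ?case by simp
next
  case (Suc n)
  have s: "shift \<omega> \<in> Sigma_m m" using Sigma_shift[OF Suc.prems] .
  obtain \<xi>' where xi': "\<forall>k<n. comp_n T ((shift ^^ Suc k) (shift \<omega>)) (n - k - 1) 0 \<le> \<xi>' k \<and>
             \<xi>' k \<le> comp_n T ((shift ^^ Suc k) (shift \<omega>)) (n - k - 1) 1"
    and L: "ln (D_n T n (shift \<omega>)) = (\<Sum>k<n. ln (T' (shift \<omega> k) (\<xi>' k)))"
    using Suc.IH[OF s] by blast
  define a where "a = comp_n T (shift \<omega>) n 0"
  define b where "b = comp_n T (shift \<omega>) n 1"
  have ab: "0 \<le> a" "a < b" "b \<le> 1" using comp_props[OF s, of n] unfolding a_def b_def by auto
  have i: "\<omega> 0 \<in> {1..m}" using Suc.prems by (auto simp: Sigma_m_def)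
  obtain \<xi>0 where x0: "a < \<xi>0" "\<xi>0 < b" and eq: "T (\<omega> 0) b - T (\<omega> 0) a = T' (\<omega> 0) \<xi>0 * (b - a)"
    using T_mvt[OF i ab] by blast
  have Dn: "D_n T n (shift \<omega>) = b - a" using D_eq(1)[OF s] a_def b_def by simp
  have DSn: "D_n T (Suc n) \<omega> = T' (\<omega> 0) \<xi>0 * (b - a)"
    using D_eq(1)[OF Suc.prems, of "Suc n"] eq unfolding comp_Suc_first a_def b_def by simp
  have p0: "T' (\<omega> 0) \<xi>0 > 0" using pos[OF i] x0 ab by auto
  define \<xi> where "\<xi> = (\<lambda>k. case k of 0 \<Rightarrow> \<xi>0 | Suc j \<Rightarrow> \<xi>' j)"
  show ?case
  proof (intro exI conjI)
    show "\<forall>k<Suc n. comp_n T ((shift ^^ Suc k) \<omega>) (Suc n - k - 1) 0 \<le> \<xi> k \<and>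
          \<xi> k \<le> comp_n T ((shift ^^ Suc k) \<omega>) (Suc n - k - 1) 1"
    proof (intro allI impI)
      fix k assume k: "k < Suc n"
      show "comp_n T ((shift ^^ Suc k) \<omega>) (Suc n - k - 1) 0 \<le> \<xi> k \<and>
          \<xi> k \<le> comp_n T ((shift ^^ Suc k) \<omega>) (Suc n - k - 1) 1"
      proof (cases k)
        case 0
        thus ?thesis using x0 unfolding a_def b_def \<xi>_def by simp
      next
        case (Suc j)
        have "(shift ^^ Suc k) \<omega> = (shift ^^ Suc j) (shift \<omega>)"
          unfolding Suc by (simp only: funpow_Suc_right o_apply)
        thus ?thesis using xi' k Suc unfolding \<xi>_def by simp
      qed
    qed
    have "ln (D_n T (Suc n) \<omega>) = ln (T' (\<omega> 0) \<xi>0) + ln (D_n T n (shift \<omega>))"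
      using DSn Dn p0 ab by (simp add: ln_mult)
    also have "\<dots> = (\<Sum>k<Suc n. ln (T' (\<omega> k) (\<xi> k)))"
      unfolding L sum.lessThan_Suc_shift \<xi>_def by (simp add: shift_def)
    finally show "ln (D_n T (Suc n) \<omega>) = (\<Sum>k<Suc n. ln (T' (\<omega> k) (\<xi> k)))" .
  qed
qed

end


context ifs begin

lemma lncont: "i \<in> {1..m} \<Longrightarrow> continuous_on {0..1} (\<lambda>x. ln (T' i x))"
  by (rule continuous_on_ln[OF cont_deriv]) (use pos in force)+

lemma modulus:
  assumes "e > 0"
  shows "\<exists>\<eta>>0. \<forall>i\<in>{1..m}. \<forall>x\<in>{0..1}. \<forall>y\<in>{0..1}. \<bar>x - y\<bar> < \<eta> \<longrightarrow>
            \<bar>ln (T' i x) - ln (T' i y)\<bar> < e"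
proof -
  have "\<forall>i\<in>{1..m}. \<exists>d>0. \<forall>x\<in>{0..1}. \<forall>y\<in>{0..1}. \<bar>x - y\<bar> < d \<longrightarrow>
            \<bar>ln (T' i x) - ln (T' i y)\<bar> < e"
  proof
    fix i assume i: "i \<in> {1..m}"
    have "uniformly_continuous_on {0..1::real} (\<lambda>x. ln (T' i x))"
      by (rule compact_uniformly_continuous[OF lncont[OF i]]) simp
    then obtain d where "d > 0" and d: "\<forall>x\<in>{0..1}. \<forall>x'\<in>{0..1}. dist x' x < d \<longrightarrow>
        dist (ln (T' i x')) (ln (T' i x)) < e"
      unfolding uniformly_continuous_on_def using assms by blast
    thus "\<exists>d>0. \<forall>x\<in>{0..1}. \<forall>y\<in>{0..1}. \<bar>x - y\<bar> < d \<longrightarrow>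
            \<bar>ln (T' i x) - ln (T' i y)\<bar> < e"
      by (auto simp: dist_real_def)
  qed
  then obtain d where d: "\<forall>i\<in>{1..m}. d i > 0 \<and> (\<forall>x\<in>{0..1}. \<forall>y\<in>{0..1}. \<bar>x - y\<bar> < d i \<longrightarrow>
            \<bar>ln (T' i x) - ln (T' i y)\<bar> < e)"
    by metis
  define \<eta> where "\<eta> = Min (insert 1 (d ` {1..m}))"
  have "\<eta> > 0" unfolding \<eta>_def using d by (auto simp: Min_gr_iff)
  moreover have "\<forall>i\<in>{1..m}. \<eta> \<le> d i" unfolding \<eta>_def by (intro ballI Min_le) auto
  ultimately show ?thesis using d by (meson less_le_trans)
qed

lemma bound: "\<exists>B\<ge>0. \<forall>i\<in>{1..m}. \<forall>x\<in>{0..1}. \<bar>ln (T' i x)\<bar> \<le> B"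
proof -
  have "\<forall>i\<in>{1..m}. \<exists>B. \<forall>x\<in>{0..1}. \<bar>ln (T' i x)\<bar> \<le> B"
  proof
    fix i assume i: "i \<in> {1..m}"
    have "compact ((\<lambda>x. ln (T' i x)) ` {0..1::real})"
      by (rule compact_continuous_image[OF lncont[OF i]]) simp
    hence "bounded ((\<lambda>x. ln (T' i x)) ` {0..1::real})" by (rule compact_imp_bounded)
    thus "\<exists>B. \<forall>x\<in>{0..1}. \<bar>ln (T' i x)\<bar> \<le> B" unfolding bounded_real by auto
  qed
  then obtain B where B: "\<forall>i\<in>{1..m}. \<forall>x\<in>{0..1}. \<bar>ln (T' i x)\<bar> \<le> B i" by metis
  show ?thesis
  proof (intro exI conjI ballI)
    show "0 \<le> (\<Sum>i\<in>{1..m}. \<bar>B i\<bar>)" by (simp add: sum_nonneg)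
    fix i x assume "i \<in> {1..m}" "x \<in> {0..1::real}"
    hence "\<bar>ln (T' i x)\<bar> \<le> \<bar>B i\<bar>" using B by force
    also have "\<dots> \<le> (\<Sum>i\<in>{1..m}. \<bar>B i\<bar>)"
      by (rule member_le_sum) (use \<open>i \<in> {1..m}\<close> in auto)
    finally show "\<bar>ln (T' i x)\<bar> \<le> (\<Sum>i\<in>{1..m}. \<bar>B i\<bar>)" .
  qed
qed

lemma card_tail: "card {k \<in> {..<n}. n \<le> k + N} \<le> N"
proof -
  have "{k \<in> {..<n}. n \<le> k + N} \<subseteq> {n - N..<n}" by auto
  hence "card {k \<in> {..<n}. n \<le> k + N} \<le> card {n - N..<n}" by (intro card_mono) auto
  thus ?thesis by simp
qed

lemma main_est:
  assumes "e > 0"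
  shows "\<exists>N. \<forall>n\<ge>N. \<forall>\<omega>\<in>Sigma_m m.
     \<bar>- (1 / real n) * ln (D_n T n \<omega>) - A_n (g_fun T T') n \<omega>\<bar> \<le> e"
proof -
  obtain \<eta> where "\<eta> > 0" and eta: "\<forall>i\<in>{1..m}. \<forall>x\<in>{0..1}. \<forall>y\<in>{0..1}. \<bar>x - y\<bar> < \<eta> \<longrightarrow>
            \<bar>ln (T' i x) - ln (T' i y)\<bar> < e/2"
    using modulus[of "e/2"] assms by auto
  obtain N0 where N0: "\<forall>n\<ge>N0. \<forall>\<omega>\<in>Sigma_m m. \<bar>D_n T n \<omega>\<bar> < \<eta>" using unif \<open>\<eta> > 0\<close> by blast
  obtain B where "B \<ge> 0" and B: "\<forall>i\<in>{1..m}. \<forall>x\<in>{0..1}. \<bar>ln (T' i x)\<bar> \<le> B" using bound by blast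
  define N where "N = Suc (nat \<lceil>4 * B * N0 / e\<rceil>)"
  show ?thesis
  proof (intro exI allI impI ballI)
    fix n \<omega> assume nN: "N \<le> n" and \<omega>: "\<omega> \<in> Sigma_m m"
    have npos: "real n > 0" using nN N_def by simp
    have nbig: "4 * B * N0 / e \<le> real n" using nN unfolding N_def by linarith
    hence nbig2: "4 * B * N0 \<le> e * real n" using assms by (simp add: divide_le_eq mult.commute)
    obtain \<xi> where xi: "\<forall>k<n. comp_n T ((shift ^^ Suc k) \<omega>) (n - k - 1) 0 \<le> \<xi> k \<and>
             \<xi> k \<le> comp_n T ((shift ^^ Suc k) \<omega>) (n - k - 1) 1"
      and L: "ln (D_n T n \<omega>) = (\<Sum>k<n. ln (T' (\<omega> k) (\<xi> k)))"
      using decomp[OF \<omega>] by blast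
    define P where "P k = Pi_proj T ((shift ^^ Suc k) \<omega>)" for k
    define h where "h k = ln (T' (\<omega> k) (\<xi> k)) - ln (T' (\<omega> k) (P k))" for k
    have g: "g_fun T T' ((shift ^^ k) \<omega>) = - ln (T' (\<omega> k) (P k))" for k
      unfolding g_fun_def P_def using funpow_shift[of k \<omega> 0] by simp
    have expr: "- (1 / real n) * ln (D_n T n \<omega>) - A_n (g_fun T T') n \<omega> = - (1 / real n) * (\<Sum>k<n. h k)"
      unfolding A_n_def g L h_def by (simp add: sum_subtractf algebra_simps sum_negf)
    have hb: "\<bar>h k\<bar> \<le> e/2 + (if n \<le> k + N0 then 2 * B else 0)" if k: "k < n" for k
    proof -
      let ?w = "(shift ^^ Suc k) \<omega>"
      have w: "?w \<in> Sigma_m m" by (rule Sigma_funpow[OF \<omega>])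
      have i: "\<omega> k \<in> {1..m}" using \<omega> by (auto simp: Sigma_m_def)
      have ab: "comp_n T ?w (n-k-1) 0 \<in> {0..1}" "comp_n T ?w (n-k-1) 1 \<in> {0..1}"
        using comp_props[OF w, of "n-k-1"] by auto
      have Pm: "comp_n T ?w (n-k-1) 0 \<le> P k \<and> P k \<le> comp_n T ?w (n-k-1) 1"
        unfolding P_def by (rule Pi_mem[OF w])
      have xk: "comp_n T ?w (n-k-1) 0 \<le> \<xi> k \<and> \<xi> k \<le> comp_n T ?w (n-k-1) 1" using xi k by blast
      have inI: "\<xi> k \<in> {0..1}" "P k \<in> {0..1}" using ab Pm xk by auto
      show ?thesis
      proof (cases "n \<le> k + N0")
        case True
        have "\<bar>h k\<bar> \<le> 2 * B" unfolding h_def using B i inI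
          by (smt (verit, best))
        thus ?thesis using True assms by simp
      next
        case False
        have "\<bar>D_n T (n-k-1) ?w\<bar> < \<eta>" using N0 w False by auto
        hence "\<bar>\<xi> k - P k\<bar> < \<eta>" using D_eq(1)[OF w, of "n-k-1"] Pm xk by (simp add: abs_less_iff)
        hence "\<bar>h k\<bar> < e/2" unfolding h_def using eta i inI by blast
        thus ?thesis using False by simp
      qed
    qed
    have "\<bar>\<Sum>k<n. h k\<bar> \<le> (\<Sum>k<n. \<bar>h k\<bar>)" by (rule sum_abs)
    also have "\<dots> \<le> (\<Sum>k<n. e/2 + (if n \<le> k + N0 then 2 * B else 0))"
      by (rule sum_mono) (use hb in auto)
    also have "\<dots> = real n * (e/2) + (\<Sum>k\<in>{k\<in>{..<n}. n \<le> k + N0}. 2 * B)"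
      by (simp add: sum.distrib sum.inter_filter[of "{..<n}", symmetric])
    also have "\<dots> = real n * (e/2) + 2 * B * card {k\<in>{..<n}. n \<le> k + N0}"
      by simp
    also have "\<dots> \<le> real n * (e/2) + 2 * B * N0"
      using card_tail[of n N0] \<open>B \<ge> 0\<close> by (simp add: mult_left_mono)
    also have "\<dots> \<le> real n * e" using nbig2 by (simp add: algebra_simps)
    finally have S: "\<bar>\<Sum>k<n. h k\<bar> \<le> real n * e" .
    have "\<bar>- (1 / real n) * (\<Sum>k<n. h k)\<bar> = \<bar>\<Sum>k<n. h k\<bar> / real n"
      by (simp add: abs_mult)
    also have "\<dots> \<le> e" using S npos by (simp add: divide_le_eq mult.commute)
    finally show "\<bar>- (1 / real n) * ln (D_n T n \<omega>) - A_n (g_fun T T') n \<omega>\<bar> \<le> e"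
      unfolding expr .
  qed
qed

end

theorem lemma1:
  fixes m :: nat and T T' :: "nat \<Rightarrow> real \<Rightarrow> real"
  assumes m_pos: "m \<ge> 1"
    and maps: "\<And>i. i \<in> {1..m} \<Longrightarrow> T i ` {0..1} \<subseteq> {0..1}"
    and deriv: "\<And>i x. i \<in> {1..m} \<Longrightarrow> x \<in> {0..1} \<Longrightarrow>
                  (T i has_real_derivative T' i x) (at x within {0..1})"
    and cont_deriv: "\<And>i. i \<in> {1..m} \<Longrightarrow> continuous_on {0..1} (T' i)"
    and pos: "\<And>i x. i \<in> {1..m} \<Longrightarrow> x \<in> {0..1} \<Longrightarrow> T' i x > 0"
    and disj: "\<And>i j. i \<in> {1..m} \<Longrightarrow> j \<in> {1..m} \<Longrightarrow> i \<noteq> j \<Longrightarrow>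
                  T i ` {0<..<1} \<inter> T j ` {0<..<1} = {}"
    and unif: "\<forall>e>0. \<exists>N. \<forall>n\<ge>N. \<forall>\<omega>\<in>Sigma_m m. \<bar>D_n T n \<omega>\<bar> < e"
  shows "(\<lambda>n. SUP \<omega>\<in>Sigma_m m.
            ereal \<bar>- (1 / real n) * ln (D_n T n \<omega>) - A_n (g_fun T T') n \<omega>\<bar>)
         \<longlonglongrightarrow> 0"
proof -
  interpret ifs m T T'
    by (unfold_locales) (use maps deriv cont_deriv pos unif in auto)
  have w: "(\<lambda>_. 1) \<in> Sigma_m m" using m_pos by (simp add: Sigma_m_def)
  show ?thesis
  proof (rule order_tendstoI)
    fix a :: ereal assume "a < 0"
    show "\<forall>\<^sub>F n in sequentially. a < (SUP \<omega>\<in>Sigma_m m.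
            ereal \<bar>- (1 / real n) * ln (D_n T n \<omega>) - A_n (g_fun T T') n \<omega>\<bar>)"
    proof (rule always_eventually, rule allI)
      fix n
      have "0 \<le> (SUP \<omega>\<in>Sigma_m m.
            ereal \<bar>- (1 / real n) * ln (D_n T n \<omega>) - A_n (g_fun T T') n \<omega>\<bar>)"
        by (rule SUP_upper2[OF w]) simp
      thus "a < (SUP \<omega>\<in>Sigma_m m.
            ereal \<bar>- (1 / real n) * ln (D_n T n \<omega>) - A_n (g_fun T T') n \<omega>\<bar>)"
        using \<open>a < 0\<close> by (meson less_le_trans)
    qed
  next
    fix a :: ereal assume "0 < a"
    then obtain z where z: "0 < ereal z" "ereal z < a" using ereal_dense2 by blast
    hence "z > 0" by simp
    then obtain N where N: "\<forall>n\<ge>N. \<forall>\<omega>\<in>Sigma_m m.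
     \<bar>- (1 / real n) * ln (D_n T n \<omega>) - A_n (g_fun T T') n \<omega>\<bar> \<le> z"
      using main_est by blast
    show "\<forall>\<^sub>F n in sequentially. (SUP \<omega>\<in>Sigma_m m.
            ereal \<bar>- (1 / real n) * ln (D_n T n \<omega>) - A_n (g_fun T T') n \<omega>\<bar>) < a"
      unfolding eventually_sequentially
    proof (intro exI allI impI)
      fix n assume "N \<le> n"
      have "(SUP \<omega>\<in>Sigma_m m.
            ereal \<bar>- (1 / real n) * ln (D_n T n \<omega>) - A_n (g_fun T T') n \<omega>\<bar>) \<le> ereal z"
        by (rule SUP_least) (use N \<open>N \<le> n\<close> in auto)
      thus "(SUP \<omega>\<in>Sigma_m m.
            ereal \<bar>- (1 / real n) * ln (D_n T n \<omega>) - A_n (g_fun T T') n \<omega>\<bar>) < a"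
        using z(2) by (meson le_less_trans)
    qed
  qed
qed

end
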